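(* Let $d\in\{1,2,3,7,11\}$, $K=\mathbb{Q}(\sqrt{-d})$, $\mathcal{O}_d$ its ring of integers, $\Delta$ a positive integer not of the form $\beta\bar\beta$ with $\beta\in\mathcal{O}_d$, and $k\ge1$ odd. Let $$H_{k,\Delta}(z)=\sum_{\substack{(a,b,c)\in\mathbb{Z}\times\mathcal{O}_d\times\mathbb{Z}\\ b\bar b-ac=\Delta,\ a<0}}\max\left(0,\left(a|z|^2+bz+\bar b\bar z+c\right)^k\right).$$ Then for all $z\in\mathbb{C}$: (1) $H_{k,\Delta}(\bar z)=H_{k,\Delta}(z)$; (2) $H_{k,\Delta}(uz)=H_{k,\Delta}(z)$ for every unit $u\in\mathcal{O}_d^\times$; (3) $H_{k,\Delta}(z+\lambda)=H_{k,\Delta}(z)$ for every $\lambda\in\mathcal{O}_d$. *)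

theory Defs
  imports "HOL-Analysis.Analysis"
begin

text \<open>Integral basis generator of the ring of integers of Q(sqrt(-d)) for squarefree d > 0:
  sqrt(-d) if d is not 3 mod 4, and (1 + sqrt(-d))/2 if d = 3 mod 4.\<close>
definition omega_d :: "nat \<Rightarrow> complex" where
  "omega_d d = (if d mod 4 = 3 then (1 + \<i> * complex_of_real (sqrt (real d))) / 2
                else \<i> * complex_of_real (sqrt (real d)))"

definition O_d :: "nat \<Rightarrow> complex set" where
  "O_d d = {of_int m + of_int n * omega_d d | m n :: int. True}"

definition units_O_d :: "nat \<Rightarrow> complex set" where
  "units_O_d d = {u \<in> O_d d. \<exists>v \<in> O_d d. u * v = 1}"

definition H_index :: "nat \<Rightarrow> int \<Rightarrow> (int \<times> complex \<times> int) set" where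
  "H_index d \<Delta> = {(a, b, c). b \<in> O_d d \<and> b * cnj b - of_int (a * c) = of_int \<Delta> \<and> a < 0}"

text \<open>The summand max(0, (a|z|^2 + b z + bbar zbar + c)^k); the inner expression is real.\<close>
definition H_term :: "nat \<Rightarrow> complex \<Rightarrow> int \<times> complex \<times> int \<Rightarrow> real" where
  "H_term k z t = (case t of (a, b, c) \<Rightarrow>
     max 0 ((Re (of_int a * complex_of_real ((cmod z)\<^sup>2) + b * z + cnj b * cnj z + of_int c)) ^ k))"

definition H :: "nat \<Rightarrow> nat \<Rightarrow> int \<Rightarrow> complex \<Rightarrow> real" where
  "H d k \<Delta> z = (\<Sum>\<^sub>\<infinity> t \<in> H_index d \<Delta>. H_term k z t)"

end

theory Submission
  imports Defs
begin

lemma omega_props: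
  "\<exists>t nn::int. cnj (omega_d d) = of_int t - omega_d d \<and>
      omega_d d * omega_d d = of_int t * omega_d d - of_int nn"
proof (cases "d mod 4 = 3")
  case True
  have s: "sqrt (real d) * sqrt (real d) = real d" by simp
  have dv: "(4::int) dvd (int d + 1)" using True by presburger
  then obtain q where q: "int d + 1 = 4 * q" by blast
  have qr: "real_of_int q = (real d + 1) / 4" using q
    by (metis (mono_tags, opaque_lifting) of_int_add of_int_of_nat_eq of_int_1 of_int_mult of_int_numeral
        nonzero_mult_div_cancel_left zero_neq_numeral)
  show ?thesis
    apply (rule exI[of _ 1], rule exI[of _ q])
    using True s qr by (simp add: omega_d_def complex_eq_iff field_simps)
next
  case False
  have s: "sqrt (real d) * sqrt (real d) = real d" by simp
  show ?thesis
    apply (rule exI[of _ 0], rule exI[of _ "int d"])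
    using False s by (simp add: omega_d_def complex_eq_iff)
qed

context
  fixes d :: nat
begin

lemma Od_cnj: assumes "x \<in> O_d d" shows "cnj x \<in> O_d d"
proof -
  obtain t nn where tn: "cnj (omega_d d) = of_int t - omega_d d"
    "omega_d d * omega_d d = of_int t * omega_d d - of_int nn" using omega_props by blast
  obtain m n where x: "x = of_int m + of_int n * omega_d d" using assms unfolding O_d_def by blast
  have "cnj x = of_int (m + n*t) + of_int (-n) * omega_d d"
    by (simp add: x tn(1) algebra_simps)
  thus ?thesis unfolding O_d_def by blast
qed

lemma Od_add: assumes "x \<in> O_d d" "y \<in> O_d d" shows "x + y \<in> O_d d"
proof -
  obtain m n where x: "x = of_int m + of_int n * omega_d d" using assms unfolding O_d_def by blast
  obtain m' n' where y: "y = of_int m' + of_int n' * omega_d d" using assms unfolding O_d_def by blast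
  have "x + y = of_int (m+m') + of_int (n+n') * omega_d d" using x y by (simp add: algebra_simps)
  thus ?thesis unfolding O_d_def by blast
qed

lemma Od_neg: assumes "x \<in> O_d d" shows "- x \<in> O_d d"
proof -
  obtain m n where x: "x = of_int m + of_int n * omega_d d" using assms unfolding O_d_def by blast
  have "- x = of_int (-m) + of_int (-n) * omega_d d" using x by (simp add: algebra_simps)
  thus ?thesis unfolding O_d_def by blast
qed

lemma Od_int: "of_int m \<in> O_d d"
proof -
  have "(of_int m :: complex) = of_int m + of_int 0 * omega_d d" by simp
  thus ?thesis unfolding O_d_def by blast
qed

lemma Od_mult: assumes "x \<in> O_d d" "y \<in> O_d d" shows "x * y \<in> O_d d"
proof -
  obtain t nn where tn: "cnj (omega_d d) = of_int t - omega_d d"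
    "omega_d d * omega_d d = of_int t * omega_d d - of_int nn" using omega_props by blast
  obtain m n where x: "x = of_int m + of_int n * omega_d d" using assms unfolding O_d_def by blast
  obtain m' n' where y: "y = of_int m' + of_int n' * omega_d d" using assms unfolding O_d_def by blast
  have "x * y = of_int m * of_int m' + (of_int m * of_int n' + of_int n * of_int m') * omega_d d
     + of_int n * of_int n' * (omega_d d * omega_d d)" using x y by (simp add: algebra_simps)
  also have "\<dots> = of_int (m*m' - n*n'*nn) + of_int (m*n' + n*m' + n*n'*t) * omega_d d"
    unfolding tn(2) by (simp add: algebra_simps)
  finally show ?thesis unfolding O_d_def by blast
qed

lemma Od_norm: assumes "x \<in> O_d d" shows "\<exists>N::int. x * cnj x = of_int N"
proof -
  obtain t nn where tn: "cnj (omega_d d) = of_int t - omega_d d"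
    "omega_d d * omega_d d = of_int t * omega_d d - of_int nn" using omega_props by blast
  obtain m n where x: "x = of_int m + of_int n * omega_d d" using assms unfolding O_d_def by blast
  have "x * cnj x = of_int m * of_int m + of_int m * of_int n * of_int t
      + of_int n * of_int n * of_int t * omega_d d - of_int n * of_int n * (omega_d d * omega_d d)"
    by (simp add: x tn(1) algebra_simps)
  also have "\<dots> = of_int (m*m + m*n*t + n*n*nn)" unfolding tn(2) by (simp add: algebra_simps)
  finally show ?thesis by blast
qed

lemma Od_trace: assumes "x \<in> O_d d" shows "x + cnj x = of_int \<lfloor>2 * Re x\<rfloor>"
proof -
  obtain t nn where tn: "cnj (omega_d d) = of_int t - omega_d d"
    "omega_d d * omega_d d = of_int t * omega_d d - of_int nn" using omega_props by blast
  obtain m n where x: "x = of_int m + of_int n * omega_d d" using assms unfolding O_d_def by blast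
  have e: "x + cnj x = of_int (2*m + n*t)" by (simp add: x tn(1) algebra_simps)
  have "Re (x + cnj x) = 2 * Re x" by simp
  hence r: "2 * Re x = real_of_int (2*m+n*t)" unfolding e by (simp only: complex_Re_of_int)
  show ?thesis unfolding r floor_of_int using e .
qed

end

lemma term_eqI:
  assumes "A = B" shows "max 0 (Re A ^ k) = max 0 (Re B ^ k)" using assms by simp

theorem proposition2p3:
  fixes d k :: nat and \<Delta> :: int
  assumes "d \<in> {1, 2, 3, 7, 11}"
    and "\<Delta> > 0"
    and "\<not> (\<exists>\<beta> \<in> O_d d. \<beta> * cnj \<beta> = of_int \<Delta>)"
    and "k \<ge> 1" and "odd k"
  shows "\<forall>z. H d k \<Delta> (cnj z) = H d k \<Delta> z
       \<and> (\<forall>u \<in> units_O_d d. H d k \<Delta> (u * z) = H d k \<Delta> z)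
       \<and> (\<forall>l \<in> O_d d. H d k \<Delta> (z + l) = H d k \<Delta> z)"
proof (intro allI conjI ballI)
  fix z :: complex
  let ?A = "H_index d \<Delta>"
  have nz: "\<And>w. complex_of_real ((cmod w)\<^sup>2) = w * cnj w" by (rule complex_norm_square)
  {
    define g :: "int \<times> complex \<times> int \<Rightarrow> int \<times> complex \<times> int" where "g = (\<lambda>(a, b, c). (a, cnj b, c))"
    have bij: "bij_betw g ?A ?A"
      by (rule bij_betwI[where g = g]) (auto simp: g_def H_index_def Od_cnj mult.commute)
    have "H d k \<Delta> z = infsum (\<lambda>t. H_term k z (g t)) ?A"
      unfolding H_def by (rule infsum_reindex_bij_betw[OF bij, symmetric])
    also have "\<dots> = H d k \<Delta> (cnj z)" unfolding H_def
      by (rule infsum_cong) (auto simp: g_def H_term_def nz algebra_simps)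
    finally show "H d k \<Delta> (cnj z) = H d k \<Delta> z" by simp
  }
  {
    fix u assume u: "u \<in> units_O_d d"
    then obtain v where uO: "u \<in> O_d d" and vO: "v \<in> O_d d" and uv: "u * v = 1"
      unfolding units_O_d_def by blast
    obtain A where A: "u * cnj u = of_int A" using Od_norm[OF uO] by blast
    obtain B where B: "v * cnj v = of_int B" using Od_norm[OF vO] by blast
    have "(u * cnj u) * (v * cnj v) = (u * v) * cnj (u * v)" by simp
    hence AB: "A * B = 1" using A B uv by (metis complex_cnj_one mult_1 of_int_eq_1_iff of_int_mult)
    have "A \<ge> 0" proof -
      have "of_int A = complex_of_real ((cmod u)\<^sup>2)" using A nz by simp
      hence "real_of_int A = (cmod u)\<^sup>2" by (metis of_real_eq_iff of_real_of_int_eq)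
      thus ?thesis by (metis of_int_0_le_iff zero_le_power2)
    qed
    hence A1: "A = 1" using AB using zmult_eq_1_iff by (metis int_one_le_iff_zero_less linorder_not_le mult_le_0_iff zero_less_one_class.zero_le_one order_antisym_conv pos_zmult_eq_1_iff)
    have uu: "u * cnj u = 1" using A A1 by simp
    have cuO: "cnj u \<in> O_d d" using Od_cnj[OF uO] .
    define g :: "int \<times> complex \<times> int \<Rightarrow> int \<times> complex \<times> int" where "g = (\<lambda>(a, b, c). (a, b * u, c))"
    define h :: "int \<times> complex \<times> int \<Rightarrow> int \<times> complex \<times> int" where "h = (\<lambda>(a, b, c). (a, b * cnj u, c))"
    have n1: "b * u * (cnj b * cnj u) = b * cnj b" for b
    proof -
      have "b * u * (cnj b * cnj u) = b * cnj b * (u * cnj u)" by (simp add: ac_simps)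
      thus ?thesis using uu by simp
    qed
    have n2: "b * cnj u * (cnj b * u) = b * cnj b" for b
    proof -
      have "b * cnj u * (cnj b * u) = b * cnj b * (u * cnj u)" by (simp add: ac_simps)
      thus ?thesis using uu by simp
    qed
    have i1: "b * u * cnj u = b" for b using uu by (simp add: mult.assoc)
    have i2: "b * cnj u * u = b" for b using uu by (simp add: mult.assoc mult.commute)
    have bij: "bij_betw g ?A ?A"
      apply (rule bij_betwI[where g = h])
      using uO cuO
      by (auto simp: g_def h_def H_index_def Od_mult n1 n2 i1 i2)
    have "H d k \<Delta> z = infsum (\<lambda>t. H_term k z (g t)) ?A"
      unfolding H_def by (rule infsum_reindex_bij_betw[OF bij, symmetric])
    also have "\<dots> = H d k \<Delta> (u * z)" unfolding H_def
    proof (rule infsum_cong)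
      fix t assume "t \<in> ?A"
      obtain a b c where t: "t = (a, b, c)" by (cases t) auto
      have "of_int a * complex_of_real ((cmod z)\<^sup>2) + b * u * z + cnj (b * u) * cnj z + of_int c
          = of_int a * complex_of_real ((cmod (u * z))\<^sup>2) + b * (u * z) + cnj b * cnj (u * z) + of_int c"
        unfolding nz using uu by (simp add: algebra_simps)
      thus "H_term k z (g t) = H_term k (u * z) t"
        unfolding t g_def H_term_def prod.case by (rule term_eqI)
    qed
    finally show "H d k \<Delta> (u * z) = H d k \<Delta> z" by simp
  }
  {
    fix l assume lO: "l \<in> O_d d"
    obtain Nl where Nl: "l * cnj l = of_int Nl" using Od_norm[OF lO] by blast
    have clO: "cnj l \<in> O_d d" using Od_cnj[OF lO] .
    define T where "T = (\<lambda>b::complex. \<lfloor>2 * Re (b * l)\<rfloor>)"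
    have T: "b \<in> O_d d \<Longrightarrow> of_int (T b) = b * l + cnj b * cnj l" for b
      using Od_trace[OF Od_mult[OF _ lO], of b] unfolding T_def by simp
    define g :: "int \<times> complex \<times> int \<Rightarrow> int \<times> complex \<times> int" where "g = (\<lambda>(a, b, c).
        (a, b + of_int a * cnj l, c + a * Nl + T b))"
    define h :: "int \<times> complex \<times> int \<Rightarrow> int \<times> complex \<times> int" where "h = (\<lambda>(a, b, c).
        (a, b - of_int a * cnj l, c - a * Nl - T (b - of_int a * cnj l)))"
    have memg: "g t \<in> ?A" if "t \<in> ?A" for t
    proof -
      obtain a b c where t: "t = (a, b, c)" by (cases t) auto
      have bO: "b \<in> O_d d" and eq: "b * cnj b - of_int (a * c) = of_int \<Delta>" and a: "a < 0"
        using that t by (auto simp: H_index_def)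
      have "b + of_int a * cnj l \<in> O_d d" by (rule Od_add[OF bO Od_mult[OF Od_int clO]])
      moreover have "(b + of_int a * cnj l) * cnj (b + of_int a * cnj l)
          - of_int (a * (c + a * Nl + T b)) = of_int \<Delta>"
        using eq T[OF bO] Nl[symmetric] by (simp add: algebra_simps)
      ultimately show ?thesis using a t by (simp add: g_def H_index_def)
    qed
    have memh: "h t \<in> ?A" if "t \<in> ?A" for t
    proof -
      obtain a b c where t: "t = (a, b, c)" by (cases t) auto
      have bO: "b \<in> O_d d" and eq: "b * cnj b - of_int (a * c) = of_int \<Delta>" and a: "a < 0"
        using that t by (auto simp: H_index_def)
      have bO': "b - of_int a * cnj l \<in> O_d d"
        using Od_add[OF bO Od_neg[OF Od_mult[OF Od_int clO]]] by simp
      moreover have "(b - of_int a * cnj l) * cnj (b - of_int a * cnj l)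
          - of_int (a * (c - a * Nl - T (b - of_int a * cnj l))) = of_int \<Delta>"
      proof -
        define b' where "b' = b - of_int a * cnj l"
        have TT: "of_int (T b') = b' * l + cnj b' * cnj l" using T[OF bO'] unfolding b'_def .
        have "b' * cnj b' - of_int (a * (c - a * Nl - T b')) = b' * cnj b' - of_int a * of_int c
           + of_int a * of_int a * of_int Nl + of_int a * of_int (T b')" by (simp add: algebra_simps)
        also have "\<dots> = b' * cnj b' - of_int a * of_int c
           + of_int a * of_int a * (l * cnj l) + of_int a * (b' * l + cnj b' * cnj l)"
          by (simp only: TT Nl)
        also have "\<dots> = b * cnj b - of_int (a * c)" unfolding b'_def by (simp add: algebra_simps)
        also have "\<dots> = of_int \<Delta>" by (rule eq)
        finally show ?thesis unfolding b'_def .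
      qed
      ultimately show ?thesis using a t by (simp add: h_def H_index_def)
    qed
    have bij: "bij_betw g ?A ?A"
      apply (rule bij_betwI[where g = h])
      using memg memh by (auto simp: g_def h_def)
    have "H d k \<Delta> z = infsum (\<lambda>t. H_term k z (g t)) ?A"
      unfolding H_def by (rule infsum_reindex_bij_betw[OF bij, symmetric])
    also have "\<dots> = H d k \<Delta> (z + l)" unfolding H_def
    proof (rule infsum_cong)
      fix t assume "t \<in> ?A"
      obtain a b c where t: "t = (a, b, c)" by (cases t) auto
      have bO: "b \<in> O_d d" using \<open>t \<in> ?A\<close> t by (auto simp: H_index_def)
      have "of_int a * complex_of_real ((cmod z)\<^sup>2) + (b + of_int a * cnj l) * z
           + cnj (b + of_int a * cnj l) * cnj z + of_int (c + a * Nl + T b)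
          = of_int a * complex_of_real ((cmod (z + l))\<^sup>2) + b * (z + l) + cnj b * cnj (z + l) + of_int c"
        unfolding nz using T[OF bO] Nl by (simp add: algebra_simps)
      thus "H_term k z (g t) = H_term k (z + l) t"
        unfolding t g_def H_term_def prod.case by (rule term_eqI)
    qed
    finally show "H d k \<Delta> (z + l) = H d k \<Delta> z" by simp
  }
qed

end
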